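(* Let $\mathbf{M}_1,\dots,\mathbf{M}_L$ be nonsingular $D\times D$ integer matrices and $\mathbf{R}$ an lcrm of them. Suppose there exist pairwise commutative and coprime integer matrices $\mathbf{N}_1,\dots,\mathbf{N}_L$ and a unimodular matrix $\mathbf{U}$ such that $\mathbf{R}=\mathbf{N}_1\mathbf{N}_2\cdots\mathbf{N}_L\mathbf{U}$ and $\mathbf{N}_i$ is a left divisor of $\mathbf{M}_i$ for each $i$. Let $\mathbf{W}_i=\mathbf{N}_1\cdots\mathbf{N}_{i-1}\mathbf{N}_{i+1}\cdots\mathbf{N}_L$. For each $i$ such that $\mathbf{N}_i$ is not unimodular there exist integer matrices $\widehat{\mathbf{W}}_i,\mathbf{Q}_i$ with $\mathbf{W}_i\widehat{\mathbf{W}}_i+\mathbf{N}_i\mathbf{Q}_i=\mathbf{I}$; fix such $\widehat{\mathbf{W}}_i$, and set $\widehat{\mathbf{W}}_i=\mathbf{0}$ if $\mathbf{N}_i$ is unimodular. Then for every $\mathbf{m}\in\mathcal{N}(\mathbf{R})$ with remainders $\mathbf{r}_i=\langle\mathbf{m}\rangle_{\mathbf{M}_i}$, $$\mathbf{m}=\Big\langle\sum_{i=1}^L\mathbf{W}_i\widehat{\mathbf{W}}_i\mathbf{r}_i\Big\rangle_{\mathbf{R}}.$$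
   Context: All matrices are $D\times D$ integer matrices; $\mathbf{I}$ is the identity. Unimodular: integer with determinant $\pm1$. $\mathbf{A}$ is a left divisor of $\mathbf{M}$ if $\mathbf{A}^{-1}\mathbf{M}$ is an integer matrix. Commuting nonsingular integer matrices are coprime if all their common left (equivalently right) divisors are unimodular. An lcrm of $\mathbf{M}_1,\dots,\mathbf{M}_L$ is a nonsingular integer $\mathbf{R}$ with $\mathbf{R}=\mathbf{M}_i\mathbf{P}_i$ ($\mathbf{P}_i$ integer) for all $i$ such that every such common right multiple equals $\mathbf{R}\mathbf{A}$ for some integer $\mathbf{A}$. For nonsingular integer $\mathbf{M}$, $\mathcal{N}(\mathbf{M})=\{\mathbf{k}\in\mathbb{Z}^D:\mathbf{k}=\mathbf{M}\mathbf{x},\ \mathbf{x}\in[0,1)^D\}$, and $\langle\mathbf{m}\rangle_{\mathbf{M}}$ is the unique $\mathbf{r}\in\mathcal{N}(\mathbf{M})$ with $\mathbf{m}-\mathbf{r}\in\{\mathbf{M}\mathbf{n}:\mathbf{n}\in\mathbb{Z}^D\}$. *)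

theory Defs
  imports "HOL-Analysis.Analysis"
begin

text \<open>D x D integer matrices are rendered as int ^'n ^'n (D = CARD('n)).\<close>

definition nonsingular :: "int^'n^'n \<Rightarrow> bool" where
  "nonsingular A \<longleftrightarrow> det A \<noteq> 0"

definition unimodular :: "int^'n^'n \<Rightarrow> bool" where
  "unimodular A \<longleftrightarrow> det A = 1 \<or> det A = -1"

text \<open>A (nonsingular) is a left divisor of M iff A^-1 M is an integer matrix,
  i.e. M = A P for an integer matrix P.\<close>
definition left_divisor :: "int^'n^'n \<Rightarrow> int^'n^'n \<Rightarrow> bool" where
  "left_divisor A M \<longleftrightarrow> nonsingular A \<and> (\<exists>P. M = A ** P)"

definition coprime_mat :: "int^'n^'n \<Rightarrow> int^'n^'n \<Rightarrow> bool" where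
  "coprime_mat A B \<longleftrightarrow> (\<forall>C. left_divisor C A \<and> left_divisor C B \<longrightarrow> unimodular C)"

definition is_lcrm :: "nat \<Rightarrow> (nat \<Rightarrow> int^'n^'n) \<Rightarrow> int^'n^'n \<Rightarrow> bool" where
  "is_lcrm L M R \<longleftrightarrow> nonsingular R \<and> (\<forall>i\<in>{1..L}. \<exists>P. R = M i ** P) \<and>
     (\<forall>S. nonsingular S \<and> (\<forall>i\<in>{1..L}. \<exists>P. S = M i ** P) \<longrightarrow> (\<exists>A. S = R ** A))"

definition real_mat :: "int^'n^'n \<Rightarrow> real^'n^'n" where
  "real_mat A = (\<chi> i j. real_of_int (A $ i $ j))"

definition real_vec :: "int^'n \<Rightarrow> real^'n" where
  "real_vec v = (\<chi> i. real_of_int (v $ i))"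

definition fund_set :: "int^'n^'n \<Rightarrow> (int^'n) set" where
  "fund_set M = {k. \<exists>x::real^'n. (\<forall>i. 0 \<le> x $ i \<and> x $ i < 1) \<and> real_vec k = real_mat M *v x}"

definition mat_rem :: "int^'n \<Rightarrow> int^'n^'n \<Rightarrow> int^'n" where
  "mat_rem m M = (THE r. r \<in> fund_set M \<and> (\<exists>n. m - r = M *v n))"

definition mprod :: "nat list \<Rightarrow> (nat \<Rightarrow> int^'n^'n) \<Rightarrow> int^'n^'n" where
  "mprod xs f = foldr (\<lambda>i acc. f i ** acc) xs (mat 1)"

end

theory Submission
  imports Defs
begin


lemma mv_axis: fixes A :: "'a::semiring_1^'n^'m" shows "(A *v axis j 1) $ i = A $ i $ j"
proof -
  have "(\<Sum>ja\<in>UNIV. A $ i $ ja * (if ja = j then 1 else 0)) = (\<Sum>ja\<in>UNIV. if ja = j then A $ i $ ja else 0)"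
    by (rule sum.cong) auto
  then show ?thesis by (simp add: matrix_vector_mult_def axis_def)
qed

lemma smul_mv: "c *s ((A::int^'n^'n) *v x) = A *v (c *s x)"
  by (simp add: vec_eq_iff matrix_vector_mult_def sum_distrib_left algebra_simps)

lemma mat_eq_cols:
  fixes A B :: "'a::semiring_1^'n^'m"
  assumes "\<And>j. A *v axis j 1 = B *v axis j 1"
  shows "A = B"
proof -
  have "A $ i $ j = B $ i $ j" for i j using assms[of j] mv_axis[of A j i] mv_axis[of B j i] by simp
  then show ?thesis by (simp add: vec_eq_iff)
qed

lemma real_vec_inj: "real_vec x = real_vec y \<Longrightarrow> x = y"
  by (simp add: real_vec_def vec_eq_iff)

lemma real_vec_mult: "real_mat A *v real_vec x = real_vec (A *v x)"
  by (simp add: real_mat_def real_vec_def vec_eq_iff matrix_vector_mult_def)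

lemma real_vec_add: "real_vec (x + y) = real_vec x + real_vec y"
  by (simp add: real_vec_def vec_eq_iff)
lemma real_vec_diff: "real_vec (x - y) = real_vec x - real_vec y"
  by (simp add: real_vec_def vec_eq_iff)
lemma real_vec_scale: "real_vec (c *s y) = of_int c *s real_vec y"
  by (simp add: real_vec_def vec_eq_iff)

lemma det_real_mat: "det (real_mat A) = of_int (det A)"
  by (simp add: det_def real_mat_def of_int_sum of_int_prod)

lemma adj_exists:
  fixes A :: "int^'n^'n"
  assumes "det A \<noteq> 0"
  shows "\<exists>y. A *v y = det A *s v"
proof -
  define RA where "RA = real_mat A"
  define b where "b = real_vec v"
  define D where "D k = det(\<chi> i j. if j=k then b$i else RA$i$j)" for k
  define x where "x = (\<chi> k. D k / det RA)"
  have dA: "det RA = real_of_int (det A)" by (simp add: RA_def det_real_mat)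
  have d: "det RA \<noteq> 0" using assms by (simp add: det_real_mat RA_def)
  have ax: "RA *v x = b" unfolding x_def D_def by (subst cramer[OF d]) (rule refl)
  define y where "y = (\<chi> k. det(\<chi> i j. if j=k then v$i else A$i$j))"
  have eqk: "real_of_int (y$k) = D k" for k
  proof -
    have "real_mat (\<chi> i j. if j=k then v$i else A$i$j) = (\<chi> i j. if j=k then b$i else RA$i$j)"
      unfolding real_mat_def real_vec_def RA_def b_def by (simp add: vec_eq_iff)
    then have "det (\<chi> i j. if j=k then b$i else RA$i$j) = real_of_int (det (\<chi> i j. if j=k then v$i else A$i$j))"
      by (simp only: det_real_mat[symmetric])
    then show ?thesis unfolding D_def y_def by simp
  qed
  have "real_vec y = det RA *s x"
  proof -
    have "real_vec y $ k = (det RA *s x) $ k" for k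
      using d eqk[of k] unfolding real_vec_def x_def by simp
    then show ?thesis by (simp add: vec_eq_iff)
  qed
  then have "real_vec (A *v y) = real_vec (det A *s v)"
    by (simp add: real_vec_mult[symmetric] RA_def[symmetric] vector_scalar_commute ax real_vec_scale dA b_def[symmetric])
  then show ?thesis using real_vec_inj by blast
qed

definition lat :: "int^'n^'n \<Rightarrow> (int^'n) set" where
  "lat A = range (\<lambda>x. A *v x)"

lemma lat_add: assumes "u \<in> lat A" "v \<in> lat A" shows "u + v \<in> lat A"
proof -
  obtain x y where "u = A *v x" "v = A *v y" using assms unfolding lat_def by auto
  then have "u + v = A *v (x + y)" by (simp add: matrix_vector_right_distrib)
  then show ?thesis unfolding lat_def by (rule image_eqI) simp
qed
lemma lat_scale: assumes "u \<in> lat A" shows "c *s u \<in> lat A"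
proof -
  obtain x where "u = A *v x" using assms unfolding lat_def by auto
  then have "c *s u = A *v (c *s x)" by (simp add: smul_mv)
  then show ?thesis unfolding lat_def by (rule image_eqI) simp
qed
lemma lat_diff: assumes "u \<in> lat A" "v \<in> lat A" shows "u - v \<in> lat A"
proof -
  have "u - v = u + (-1) *s v" by (simp add: vec_eq_iff)
  then show ?thesis using lat_add lat_scale assms by metis
qed
lemma lat_mult: "A *v x \<in> lat A" unfolding lat_def by simp
lemma lat_zero: "0 \<in> lat A" using lat_mult[of A 0] by simp
lemma lat_sum: "finite S \<Longrightarrow> (\<And>i. i \<in> S \<Longrightarrow> f i \<in> lat A) \<Longrightarrow> sum f S \<in> lat A"
  by (induction S rule: finite_induct) (auto intro: lat_zero lat_add)
lemma lat_prod: assumes "v \<in> lat (A ** B)" shows "v \<in> lat A"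
proof -
  obtain x where "v = (A ** B) *v x" using assms unfolding lat_def by auto
  then have "v = A *v (B *v x)" by (simp add: matrix_vector_mul_assoc)
  then show ?thesis by (simp add: lat_mult)
qed

lemma unimod_lat:
  fixes C :: "int^'n^'n"
  assumes "unimodular C" shows "lat C = UNIV"
proof -
  { fix v
    obtain y where y: "C *v y = det C *s v" using adj_exists[of C v] assms unfolding unimodular_def by force
    have "C *v (det C *s y) = v" using assms y unfolding unimodular_def
      by (auto simp: smul_mv[symmetric] vector_smult_assoc)
    then have "v \<in> lat C" unfolding lat_def by blast }
  then show ?thesis by blast
qed

lemma lat_mult_unimod:
  assumes "unimodular U" shows "lat (P ** U) = lat P"
proof
  show "lat (P ** U) \<subseteq> lat P" using lat_prod by blast
  show "lat P \<subseteq> lat (P ** U)"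
  proof
    fix v assume "v \<in> lat P"
    then obtain w where w: "v = P *v w" unfolding lat_def by blast
    obtain z where "w = U *v z" using unimod_lat[OF assms] unfolding lat_def by blast
    then show "v \<in> lat (P ** U)" using w by (simp add: matrix_vector_mul_assoc lat_mult)
  qed
qed

lemma cols_to_mat:
  fixes A :: "int^'n^'n"
  assumes "\<And>j. A *v axis j 1 \<in> lat C"
  shows "\<exists>P. A = C ** P"
proof -
  have "\<forall>j. \<exists>p. A *v axis j 1 = C *v p" using assms unfolding lat_def by blast
  then obtain p where p: "\<And>j. A *v axis j 1 = C *v p j" by metis
  define P where "P = (\<chi> i j. p j $ i)"
  have "P *v axis j 1 = p j" for j
    by (simp add: mv_axis P_def vec_eq_iff)
  then have "A = C ** P" by (intro mat_eq_cols) (simp add: p matrix_vector_mul_assoc[symmetric])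
  then show ?thesis by blast
qed




lemma det_mat_nz: "(d::int) \<noteq> 0 \<Longrightarrow> det (mat d :: int^'n^'n) \<noteq> 0"
  by (subst det_diagonal) (auto simp: mat_def)

lemma mat_axis: "(mat d :: int^'n^'n) *v axis k 1 = d *s axis k 1"
  apply (simp only: vec_eq_iff mv_axis vector_smult_component) by (simp add: mat_def axis_def)

lemma mv_cols: "(C::int^'n^'n) *v x = (\<Sum>j\<in>UNIV. x$j *s (C *v axis j 1))"
  apply (simp only: vec_eq_iff sum_component mv_axis vector_smult_component)
  by (simp add: matrix_vector_mult_def mult.commute)

lemma lattice_basis:
  fixes S :: "(int^'n) set"
  assumes add: "\<And>u v. u\<in>S \<Longrightarrow> v\<in>S \<Longrightarrow> u+v \<in> S"
    and scale: "\<And>u c. u\<in>S \<Longrightarrow> c *s u \<in> S"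
    and dnz: "d \<noteq> 0" and full: "\<And>k. d *s axis k 1 \<in> S"
  shows "\<exists>C. lat C = S \<and> det C \<noteq> 0"
proof -
  obtain f :: "'n \<Rightarrow> nat" and N where fN: "f ` UNIV = {i. i < N}" and finj: "inj f"
    using finite_imp_inj_to_nat_seg[of "UNIV::'n set"] by auto
  define Sk where "Sk k = {v\<in>S. \<forall>j. f j > f k \<longrightarrow> v$j = 0}" for k
  have ex: "\<exists>n::nat. n > 0 \<and> (\<exists>v\<in>Sk k. v$k = int n)" for k
  proof -
    define v where "v = sgn d *s (d *s axis k 1)"
    have "v \<in> S" unfolding v_def by (rule scale[OF full])
    moreover have "v $ j = 0" if "j \<noteq> k" for j using that by (simp add: v_def axis_def)
    moreover have "\<forall>j. f j > f k \<longrightarrow> v$j = 0"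
    proof (intro allI impI)
      fix j assume "f j > f k"
      then have "j \<noteq> k" by auto
      then show "v$j = 0" by (simp add: v_def axis_def)
    qed
    ultimately have "v \<in> Sk k" unfolding Sk_def by blast
    moreover have "v $ k = int (nat \<bar>d\<bar>)"
    proof -
      have "sgn d * d = \<bar>d\<bar>" by (cases "d > 0"; cases "d < 0") auto
      then show ?thesis by (simp add: v_def axis_def)
    qed
    moreover have "nat \<bar>d\<bar> > 0" using dnz by simp
    ultimately show ?thesis by blast
  qed
  define g where "g k = (LEAST n::nat. n > 0 \<and> (\<exists>v\<in>Sk k. v$k = int n))" for k
  have gk: "g k > 0 \<and> (\<exists>v\<in>Sk k. v$k = int (g k))" for k
    unfolding g_def using LeastI_ex[OF ex[of k]] .
  have gmin: "g k \<le> n" if "n > 0" "v \<in> Sk k" "v$k = int n" for k n v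
    unfolding g_def using that by (intro Least_le) blast
  obtain b where b: "\<And>k. b k \<in> Sk k \<and> b k $ k = int (g k)" using gk by metis
  have bS: "b j \<in> S" for j using b[of j] unfolding Sk_def by auto
  define C where "C = (\<chi> i j. b j $ i)"
  have Cax: "C *v axis k 1 = b k" for k by (simp add: vec_eq_iff mv_axis C_def)
  have zS: "0 \<in> S"
  proof -
    have "(0::int) *s (d *s axis (undefined::'n) 1) \<in> S" using scale full by blast
    then show ?thesis by simp
  qed
  have main: "\<forall>v\<in>S. (\<forall>j. f j \<ge> m \<longrightarrow> v$j = 0) \<longrightarrow> v \<in> lat C" for m
  proof (induction m)
    case 0
    { fix v :: "int^'n" assume "\<forall>j. f j \<ge> 0 \<longrightarrow> v$j = 0"
      then have "v = 0" by (simp add: vec_eq_iff)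
      then have "v \<in> lat C" by (simp add: lat_zero) }
    then show ?case by blast
  next
    case (Suc m)
    show ?case
    proof (intro ballI impI)
      fix v assume vS: "v \<in> S" and vz: "\<forall>j. f j \<ge> Suc m \<longrightarrow> v$j = 0"
      show "v \<in> lat C"
      proof (cases "\<exists>k. f k = m")
        case False
        then have "\<forall>j. f j \<ge> m \<longrightarrow> v$j = 0" using vz by (metis Suc_leI le_neq_implies_less)
        then show ?thesis using Suc.IH vS by blast
      next
        case True
        then obtain k where fk: "f k = m" by blast
        define q where "q = v$k div int (g k)"
        define w where "w = v + (-q) *s b k"
        have bk: "b k \<in> S" "\<forall>j. f j > f k \<longrightarrow> b k $ j = 0" using b[of k] unfolding Sk_def by auto
        have wS: "w \<in> S" unfolding w_def using add[OF vS scale[OF bk(1)]] .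
        have wz: "\<forall>j. f j > f k \<longrightarrow> w$j = 0" using vz bk(2) fk by (simp add: w_def)
        have wk: "w$k = v$k mod int (g k)" using b[of k]
          by (simp add: w_def q_def algebra_simps minus_div_mult_eq_mod)
        have gpos: "int (g k) > 0" using gk[of k] by simp
        have "w$k = 0"
        proof (rule ccontr)
          assume ne: "w$k \<noteq> 0"
          have w0: "w$k \<ge> 0" "w$k < int (g k)" using wk gpos by simp_all
          have "w \<in> Sk k" using wS wz unfolding Sk_def by blast
          then have "g k \<le> nat (w$k)" using gmin[of "nat (w$k)" w k] ne w0 by simp
          then show False using w0 by linarith
        qed
        have "\<forall>j. f j \<ge> m \<longrightarrow> w$j = 0"
        proof (intro allI impI)
          fix j assume "f j \<ge> m"
          show "w$j = 0"
          proof (cases "j = k")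
            case True then show ?thesis using \<open>w$k = 0\<close> by simp
          next
            case False then have "f j \<noteq> f k" using finj by (auto dest: injD)
            then show ?thesis using wz fk \<open>f j \<ge> m\<close> by simp
          qed
        qed
        then have "w \<in> lat C" using Suc.IH wS by blast
        moreover have "v = w + q *s (C *v axis k 1)" by (simp add: w_def Cax vec_eq_iff)
        ultimately show ?thesis by (metis lat_add lat_scale lat_mult)
      qed
    qed
  qed
  have "S \<subseteq> lat C"
  proof
    fix v assume "v \<in> S"
    moreover have "\<forall>j. f j \<ge> N \<longrightarrow> v$j = 0"
    proof (intro allI impI)
      fix j have "f j \<in> f ` UNIV" by blast
      then have "f j < N" using fN by simp
      moreover assume "f j \<ge> N"
      ultimately show "v$j = 0" by simp
    qed
    ultimately show "v \<in> lat C" using main by blast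
  qed
  moreover have "lat C \<subseteq> S"
  proof
    fix v assume "v \<in> lat C"
    then obtain x where x: "v = C *v x" unfolding lat_def by auto
    have "(\<Sum>j\<in>F. x$j *s b j) \<in> S" if "finite F" for F
      using that by (induction F rule: finite_induct) (auto intro: zS add scale bS)
    then show "v \<in> S" using x mv_cols[of C x] Cax by simp
  qed
  ultimately have lat: "lat C = S" by blast
  have "\<exists>P. mat d = C ** P"
    by (rule cols_to_mat) (simp add: mat_axis lat full)
  then obtain P where "mat d = C ** P" by blast
  then have "det C \<noteq> 0" using det_mat_nz[OF dnz, where 'n='n] by (metis det_mul mult_zero_left)
  with lat show ?thesis by blast
qed




definition cop :: "int^'n^'n \<Rightarrow> int^'n^'n \<Rightarrow> bool" where
  "cop A B \<longleftrightarrow> (\<forall>v. \<exists>x y. v = A *v x + B *v y)"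

lemma cop_sym: "cop A B \<Longrightarrow> cop B A"
  unfolding cop_def by (metis add.commute)

lemma lat_UNIV_imp: "lat A = UNIV \<Longrightarrow> cop A B"
  unfolding cop_def lat_def by (metis add.right_neutral matrix_vector_mult_0_right rangeE UNIV_I)

lemma bezout_of_coprime:
  assumes ns: "nonsingular A" and cp: "coprime_mat A B"
  shows "cop A B"
proof -
  define S where "S = {A *v x + B *v y | x y. True}"
  have add: "u + v \<in> S" if h: "u \<in> S" "v \<in> S" for u v
  proof -
    obtain x y x' y' where "u = A *v x + B *v y" "v = A *v x' + B *v y'" using h unfolding S_def by blast
    then have "u + v = A *v (x + x') + B *v (y + y')" by (simp add: matrix_vector_right_distrib algebra_simps)
    then show ?thesis unfolding S_def by blast
  qed
  have scale: "c *s u \<in> S" if h: "u \<in> S" for u c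
  proof -
    obtain x y where "u = A *v x + B *v y" using h unfolding S_def by blast
    then have "c *s u = A *v (c *s x) + B *v (c *s y)" by (simp add: smul_mv[symmetric] vector_ssub_ldistrib scaleR_right_distrib vec_eq_iff algebra_simps)
    then show ?thesis unfolding S_def by blast
  qed
  have dA: "det A \<noteq> 0" using ns unfolding nonsingular_def .
  have full: "det A *s axis k 1 \<in> S" for k
  proof -
    obtain y where "A *v y = det A *s axis k 1" using adj_exists[OF dA] by blast
    then have "det A *s axis k 1 = A *v y + B *v 0" by simp
    then show ?thesis unfolding S_def by blast
  qed
  obtain C where C: "lat C = S" "det C \<noteq> 0" using lattice_basis[OF add scale dA full] by blast
  have "\<exists>P. A = C ** P"
  proof (rule cols_to_mat)
    fix j have "A *v axis j 1 = A *v axis j 1 + B *v 0" by simp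
    then show "A *v axis j 1 \<in> lat C" unfolding C(1) S_def by blast
  qed
  moreover have "\<exists>P. B = C ** P"
  proof (rule cols_to_mat)
    fix j have "B *v axis j 1 = A *v 0 + B *v axis j 1" by simp
    then show "B *v axis j 1 \<in> lat C" unfolding C(1) S_def by blast
  qed
  ultimately have "unimodular C" using cp C(2) unfolding coprime_mat_def left_divisor_def nonsingular_def by blast
  then have "lat C = UNIV" by (rule unimod_lat)
  then show ?thesis unfolding cop_def using C(1) S_def by blast
qed

lemma cop_mat:
  assumes "cop A B" shows "\<exists>X Y. A ** X + B ** Y = mat 1"
proof -
  have "\<forall>j. \<exists>x y. axis j 1 = A *v x + B *v y" using assms unfolding cop_def by blast
  then obtain x y where xy: "\<And>j. axis j 1 = A *v x j + B *v y j" by metis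
  define X where "X = (\<chi> i j. x j $ i)"
  define Y where "Y = (\<chi> i j. y j $ i)"
  have X: "X *v axis j 1 = x j" for j by (simp add: vec_eq_iff mv_axis X_def)
  have Y: "Y *v axis j 1 = y j" for j by (simp add: vec_eq_iff mv_axis Y_def)
  have "A ** X + B ** Y = mat 1"
    by (rule mat_eq_cols) (simp add: matrix_vector_mult_add_rdistrib matrix_vector_mul_assoc[symmetric] X Y xy[symmetric])
  then show ?thesis by blast
qed

lemma cop_prod:
  assumes "cop A B" "cop A C" "A ** C = C ** A" "B ** C = C ** B"
  shows "cop A (B ** C)"
  unfolding cop_def
proof
  fix v
  obtain a c where ac: "v = A *v a + C *v c" using assms(2) unfolding cop_def by blast
  obtain a' b' where ab: "c = A *v a' + B *v b'" using assms(1) unfolding cop_def by blast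
  have "C *v c = A *v (C *v a') + (B ** C) *v b'"
    by (simp add: ab matrix_vector_right_distrib matrix_vector_mul_assoc assms(3,4))
  then have "v = A *v (a + C *v a') + (B ** C) *v b'" using ac by (simp add: matrix_vector_right_distrib)
  then show "\<exists>x y. v = A *v x + (B ** C) *v y" by blast
qed

lemma lat_cong_cls:
  fixes B :: "int^'n^'n"
  defines "cls \<equiv> \<lambda>u. {w. w - u \<in> lat B}"
  shows "cls u = cls w \<longleftrightarrow> u - w \<in> lat B"
proof
  assume "cls u = cls w"
  moreover have "u \<in> cls u" using lat_zero unfolding cls_def by simp
  ultimately show "u - w \<in> lat B" unfolding cls_def by blast
next
  assume h: "u - w \<in> lat B"
  have "x - u \<in> lat B \<longleftrightarrow> x - w \<in> lat B" for x
  proof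
    assume "x - u \<in> lat B" then have "(x - u) + (u - w) \<in> lat B" using h lat_add by blast
    then show "x - w \<in> lat B" by simp
  next
    assume "x - w \<in> lat B" then have "(x - w) - (u - w) \<in> lat B" using h lat_diff by blast
    then show "x - u \<in> lat B" by simp
  qed
  then show "cls u = cls w" unfolding cls_def by blast
qed

lemma lat_intersect:
  fixes A B :: "int^'n^'n"
  assumes cp: "cop A B" and comm: "A ** B = B ** A" and dB: "det B \<noteq> 0"
    and va: "v \<in> lat A" and vb: "v \<in> lat B"
  shows "v \<in> lat (A ** B)"
proof -
  define cls where "cls = (\<lambda>u. {w. w - u \<in> lat B})"
  have clseq: "cls u = cls w \<longleftrightarrow> u - w \<in> lat B" for u w
    unfolding cls_def by (rule lat_cong_cls)
  define d where "d = nat \<bar>det B\<bar>"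
  have dpos: "int d > 0" using dB unfolding d_def by simp
  define Box where "Box = {w :: int^'n. \<forall>i. 0 \<le> w$i \<and> w$i < int d}"
  have "Box \<subseteq> vec_lambda ` (PiE UNIV (\<lambda>_. {0..<int d}))"
  proof
    fix w assume "w \<in> Box"
    then have "(\<lambda>i. w$i) \<in> PiE UNIV (\<lambda>_. {0..<int d})" unfolding Box_def by (auto simp: PiE_def extensional_def)
    moreover have "w = vec_lambda (\<lambda>i. w$i)" by simp
    ultimately show "w \<in> vec_lambda ` (PiE UNIV (\<lambda>_. {0..<int d}))" by blast
  qed
  moreover have "finite (PiE (UNIV::'n set) (\<lambda>_. {0..<int d}))" by (rule finite_PiE) auto
  ultimately have finBox: "finite Box" by (meson finite_imageI finite_subset)
  have dlat: "int d *s q \<in> lat B" for q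
  proof -
    obtain y where "B *v y = det B *s q" using adj_exists[OF dB] by blast
    then have "det B *s q \<in> lat B" using lat_mult by metis
    then have "sgn (det B) *s (det B *s q) \<in> lat B" by (rule lat_scale)
    moreover have "sgn (det B) * det B = int d" unfolding d_def
      by (cases "det B > 0"; cases "det B < 0") auto
    ultimately show ?thesis by (simp add: vector_smult_assoc)
  qed
  have cover: "\<exists>w\<in>Box. cls u = cls w" for u
  proof -
    define w where "w = (\<chi> i. u$i mod int d)"
    have "w \<in> Box" unfolding Box_def w_def using dpos by simp
    moreover have "u - w = int d *s (\<chi> i. u$i div int d)"
      by (simp add: w_def vec_eq_iff minus_mod_eq_mult_div[symmetric] mult.commute)
    then have "cls u = cls w" using clseq dlat by simp
    ultimately show ?thesis by blast
  qed
  define Q where "Q = cls ` Box"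
  have finQ: "finite Q" unfolding Q_def using finBox by simp
  have inQ: "cls u \<in> Q" for u using cover[of u] unfolding Q_def by force
  define \<Phi> where "\<Phi> X = {w. \<exists>u\<in>X. w - A *v u \<in> lat B}" for X
  have Phi: "\<Phi> (cls v) = cls (A *v v)" for v
  proof -
    have "(\<exists>u. u - v \<in> lat B \<and> w - A *v u \<in> lat B) \<longleftrightarrow> w - A *v v \<in> lat B" for w
    proof
      assume "\<exists>u. u - v \<in> lat B \<and> w - A *v u \<in> lat B"
      then obtain u where u: "u - v \<in> lat B" "w - A *v u \<in> lat B" by blast
      obtain z where z: "u - v = B *v z" using u(1) unfolding lat_def by blast
      have "A *v (u - v) = B *v (A *v z)" by (simp add: z matrix_vector_mul_assoc comm)
      then have "A *v (u - v) \<in> lat B" by (simp add: lat_mult)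
      then have "(w - A *v u) + A *v (u - v) \<in> lat B" using u(2) lat_add by blast
      then show "w - A *v v \<in> lat B" by (simp add: matrix_vector_mult_diff_distrib)
    next
      assume "w - A *v v \<in> lat B"
      moreover have "v - v \<in> lat B" using lat_zero by simp
      ultimately show "\<exists>u. u - v \<in> lat B \<and> w - A *v u \<in> lat B" by blast
    qed
    then show ?thesis unfolding \<Phi>_def cls_def by auto
  qed
  have "Q \<subseteq> \<Phi> ` Q"
  proof
    fix X assume "X \<in> Q"
    then obtain w where X: "X = cls w" unfolding Q_def by blast
    obtain x y where "w = A *v x + B *v y" using cp unfolding cop_def by blast
    then have "w - A *v x \<in> lat B" by (simp add: lat_mult)
    then have "X = \<Phi> (cls x)" using X Phi clseq by simp
    then show "X \<in> \<Phi> ` Q" using inQ by blast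
  qed
  then have inj: "inj_on \<Phi> Q" using finQ finite_surj_inj by blast
  obtain a where a: "v = A *v a" using va unfolding lat_def by blast
  have "\<Phi> (cls a) = \<Phi> (cls 0)"
    using Phi[of a] Phi[of 0] clseq vb a by simp
  then have "cls a = cls 0" using inj inQ unfolding inj_on_def by blast
  then have "a \<in> lat B" using clseq by simp
  then obtain c where "a = B *v c" unfolding lat_def by blast
  then have "v = (A ** B) *v c" using a by (simp add: matrix_vector_mul_assoc)
  then show ?thesis by (simp add: lat_mult)
qed




lemma real_inj:
  assumes "nonsingular M" "real_mat M *v z = 0" shows "z = 0"
proof -
  have "invertible (real_mat M)" using assms(1) by (simp add: invertible_det_nz det_real_mat nonsingular_def)
  then obtain B where "B ** real_mat M = mat 1" unfolding invertible_def by blast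
  then have "z = B *v (real_mat M *v z)" by (simp add: matrix_vector_mul_assoc)
  then show ?thesis using assms(2) by simp
qed

lemma rem_unique:
  assumes ns: "nonsingular M" and r1: "r1 \<in> fund_set M" and r2: "r2 \<in> fund_set M"
    and d: "r1 - r2 = M *v n"
  shows "r1 = r2"
proof -
  obtain x1 where x1: "\<forall>i. 0 \<le> x1$i \<and> x1$i < 1" "real_vec r1 = real_mat M *v x1" using r1 unfolding fund_set_def by blast
  obtain x2 where x2: "\<forall>i. 0 \<le> x2$i \<and> x2$i < 1" "real_vec r2 = real_mat M *v x2" using r2 unfolding fund_set_def by blast
  have "real_mat M *v real_vec n = real_mat M *v x1 - real_mat M *v x2"
    using d x1(2) x2(2) by (metis real_vec_diff real_vec_mult)
  then have "real_mat M *v (x1 - x2 - real_vec n) = 0" by (simp add: matrix_vector_mult_diff_distrib)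
  then have e: "x1 - x2 - real_vec n = 0" using real_inj[OF ns] by blast
  have "n$i = 0" for i
  proof -
    have "real_of_int (n$i) = x1$i - x2$i" using e by (simp add: vec_eq_iff real_vec_def)
    then have "real_of_int (n$i) < 1" "real_of_int (n$i) > -1" using x1(1) x2(1) by (smt)+
    then show ?thesis by linarith
  qed
  then have "n = 0" by (simp add: vec_eq_iff)
  then show ?thesis using d by simp
qed

lemma rem_exists:
  assumes ns: "nonsingular M"
  shows "\<exists>r\<in>fund_set M. \<exists>n. m - r = M *v n"
proof -
  have "invertible (real_mat M)" using ns by (simp add: invertible_det_nz det_real_mat nonsingular_def)
  then obtain B where B: "real_mat M ** B = mat 1" unfolding invertible_def by blast
  define x where "x = B *v real_vec m"
  have x: "real_mat M *v x = real_vec m" by (simp add: x_def matrix_vector_mul_assoc B)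
  define n where "n = (\<chi> i. \<lfloor>x$i\<rfloor>)"
  define r where "r = m - M *v n"
  have "real_vec r = real_mat M *v (x - real_vec n)"
    by (simp add: r_def real_vec_diff real_vec_mult[symmetric] matrix_vector_mult_diff_distrib x)
  moreover have "\<forall>i. 0 \<le> (x - real_vec n)$i \<and> (x - real_vec n)$i < 1"
    by (simp add: n_def real_vec_def) linarith
  ultimately have "r \<in> fund_set M" unfolding fund_set_def by blast
  moreover have "m - r = M *v n" by (simp add: r_def)
  ultimately show ?thesis by blast
qed

lemma mat_rem_spec:
  assumes ns: "nonsingular M"
  shows "mat_rem m M \<in> fund_set M \<and> m - mat_rem m M \<in> lat M"
proof -
  have "\<exists>!r. r \<in> fund_set M \<and> (\<exists>n. m - r = M *v n)"
  proof -
    obtain r n where r: "r \<in> fund_set M" "m - r = M *v n" using rem_exists[OF ns] by blast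
    { fix r' n' assume r': "r' \<in> fund_set M" "m - r' = M *v n'"
      have "r - r' = M *v (n' - n)" using r r' by (simp add: matrix_vector_mult_diff_distrib algebra_simps)
      then have "r = r'" using rem_unique[OF ns r(1) r'(1)] by blast }
    then show ?thesis using r by blast
  qed
  then have "mat_rem m M \<in> fund_set M \<and> (\<exists>n. m - mat_rem m M = M *v n)"
    unfolding mat_rem_def by (rule theI')
  then show ?thesis unfolding lat_def by blast
qed

lemma mat_rem_eq:
  assumes ns: "nonsingular M" and r: "r \<in> fund_set M" and d: "m - r \<in> lat M"
  shows "mat_rem m M = r"
proof -
  have s: "mat_rem m M \<in> fund_set M" "m - mat_rem m M \<in> lat M" using mat_rem_spec[OF ns] by auto
  have "(m - r) - (m - mat_rem m M) \<in> lat M" using lat_diff[OF d s(2)] .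
  then obtain n where "mat_rem m M - r = M *v n" unfolding lat_def by auto
  then show ?thesis using rem_unique[OF ns s(1) r] by blast
qed

lemma mprod_Nil[simp]: "mprod [] N = mat 1" by (simp add: mprod_def)
lemma mprod_Cons[simp]: "mprod (j#xs) N = N j ** mprod xs N" by (simp add: mprod_def)

lemma mprod_comm:
  assumes "\<forall>j\<in>set xs. A ** N j = N j ** A"
  shows "A ** mprod xs N = mprod xs N ** A"
  using assms
proof (induction xs)
  case Nil then show ?case by simp
next
  case (Cons j xs)
  have h1: "A ** N j = N j ** A" using Cons.prems by simp
  have ih: "A ** mprod xs N = mprod xs N ** A" using Cons by simp
  have "A ** (N j ** mprod xs N) = (A ** N j) ** mprod xs N" by (simp add: matrix_mul_assoc)
  also have "\<dots> = N j ** (A ** mprod xs N)" by (simp add: h1 matrix_mul_assoc)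
  also have "\<dots> = (N j ** mprod xs N) ** A" by (simp add: ih matrix_mul_assoc)
  finally show ?case by simp
qed

lemma mprod_det:
  assumes "\<forall>j\<in>set xs. det (N j) \<noteq> 0" shows "det (mprod xs N) \<noteq> 0"
  using assms by (induction xs) (auto simp: det_mul)

lemma lat_one: "lat (mat 1 :: int^'n^'n) = UNIV"
  unfolding lat_def by auto

lemma mprod_factor:
  assumes "distinct xs" "i \<in> set xs"
    and pc: "\<forall>a\<in>set xs. \<forall>b\<in>set xs. a \<noteq> b \<longrightarrow> N a ** N b = N b ** N a"
  shows "\<exists>P. mprod xs N = N i ** P"
  using assms
proof (induction xs)
  case Nil then show ?case by simp
next
  case (Cons j xs)
  show ?case
  proof (cases "j = i")
    case True
    then have "mprod (j#xs) N = N i ** mprod xs N" by simp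
    then show ?thesis by blast
  next
    case False
    have ixs: "i \<in> set xs" using Cons.prems(2) False by simp
    have d: "distinct xs" using Cons.prems(1) by simp
    have pc': "\<forall>a\<in>set xs. \<forall>b\<in>set xs. a \<noteq> b \<longrightarrow> N a ** N b = N b ** N a"
      using Cons.prems(3) by (meson list.set_intros(2))
    obtain P where P: "mprod xs N = N i ** P" using Cons.IH[OF d ixs pc'] by blast
    have c: "N j ** N i = N i ** N j" using Cons.prems(3) False ixs by (meson list.set_intros)
    have "mprod (j#xs) N = N j ** (N i ** P)" using P by simp
    also have "\<dots> = (N j ** N i) ** P" by (simp add: matrix_mul_assoc)
    also have "\<dots> = (N i ** N j) ** P" using c by simp
    also have "\<dots> = N i ** (N j ** P)" by (simp add: matrix_mul_assoc)
    finally show ?thesis by blast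
  qed
qed

lemma mprod_cop:
  assumes "distinct xs"
    and pc: "\<forall>a\<in>set xs. \<forall>b\<in>set xs. a \<noteq> b \<longrightarrow> N a ** N b = N b ** N a"
    and h: "\<forall>j\<in>set xs. cop A (N j) \<and> A ** N j = N j ** A"
  shows "cop A (mprod xs N)"
  using assms
proof (induction xs)
  case Nil
  have "cop (mat 1) A" by (rule lat_UNIV_imp) (rule lat_one)
  then show ?case using cop_sym by simp
next
  case (Cons j xs)
  have d: "distinct xs" "j \<notin> set xs" using Cons.prems(1) by simp_all
  have pc': "\<forall>a\<in>set xs. \<forall>b\<in>set xs. a \<noteq> b \<longrightarrow> N a ** N b = N b ** N a"
    using Cons.prems(2) by (meson list.set_intros(2))
  have h': "\<forall>k\<in>set xs. cop A (N k) \<and> A ** N k = N k ** A"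
    using Cons.prems(3) by (meson list.set_intros(2))
  have ih: "cop A (mprod xs N)" using Cons.IH[OF d(1) pc' h'] .
  have c1: "cop A (N j)" "A ** N j = N j ** A" using Cons.prems(3) by simp_all
  have c2: "A ** mprod xs N = mprod xs N ** A"
    by (rule mprod_comm) (use h' in blast)
  have c3: "N j ** mprod xs N = mprod xs N ** N j"
  proof (rule mprod_comm)
    show "\<forall>k\<in>set xs. N j ** N k = N k ** N j"
    proof
      fix k assume k: "k \<in> set xs"
      then have "j \<noteq> k" using d(2) by blast
      then show "N j ** N k = N k ** N j" using Cons.prems(2) k by (meson list.set_intros)
    qed
  qed
  show ?case using cop_prod[OF c1(1) ih c2 c3] by simp
qed

lemma mprod_intersect:
  assumes "distinct xs"
    and pc: "\<forall>a\<in>set xs. \<forall>b\<in>set xs. a \<noteq> b \<longrightarrow> N a ** N b = N b ** N a \<and> cop (N a) (N b)"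
    and dt: "\<forall>j\<in>set xs. det (N j) \<noteq> 0"
    and v: "\<forall>j\<in>set xs. v \<in> lat (N j)"
  shows "v \<in> lat (mprod xs N)"
  using assms
proof (induction xs)
  case Nil then show ?case by (simp add: lat_one)
next
  case (Cons j xs)
  have d: "distinct xs" "j \<notin> set xs" using Cons.prems(1) by simp_all
  have pc': "\<forall>a\<in>set xs. \<forall>b\<in>set xs. a \<noteq> b \<longrightarrow> N a ** N b = N b ** N a \<and> cop (N a) (N b)"
    using Cons.prems(2) by (meson list.set_intros(2))
  have dt': "\<forall>k\<in>set xs. det (N k) \<noteq> 0" using Cons.prems(3) by (meson list.set_intros(2))
  have v': "\<forall>k\<in>set xs. v \<in> lat (N k)" using Cons.prems(4) by (meson list.set_intros(2))
  have ih: "v \<in> lat (mprod xs N)" using Cons.IH[OF d(1) pc' dt' v'] .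
  have pcc: "\<forall>a\<in>set xs. \<forall>b\<in>set xs. a \<noteq> b \<longrightarrow> N a ** N b = N b ** N a" using pc' by blast
  have hj: "\<forall>k\<in>set xs. cop (N j) (N k) \<and> N j ** N k = N k ** N j"
  proof
    fix k assume k: "k \<in> set xs"
    then have "j \<noteq> k" using d(2) by blast
    then show "cop (N j) (N k) \<and> N j ** N k = N k ** N j" using Cons.prems(2) k by (meson list.set_intros)
  qed
  have cp: "cop (N j) (mprod xs N)" by (rule mprod_cop[OF d(1) pcc hj])
  have cm: "N j ** mprod xs N = mprod xs N ** N j" by (rule mprod_comm) (use hj in blast)
  have dd: "det (mprod xs N) \<noteq> 0" by (rule mprod_det[OF dt'])
  have vj: "v \<in> lat (N j)" using Cons.prems(4) by simp
  show ?case using lat_intersect[OF cp cm dd vj ih] by simp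
qed




theorem corollary1:
  fixes L :: nat
    and M N :: "nat \<Rightarrow> int^'n^'n"
    and R U :: "int^'n^'n"
  defines "W \<equiv> (\<lambda>i. mprod (filter (\<lambda>j. j \<noteq> i) [1..<L+1]) N)"
  assumes M_ns: "\<forall>i\<in>{1..L}. nonsingular (M i)"
    and lcrm: "is_lcrm L M R"
    and comm: "\<forall>i\<in>{1..L}. \<forall>j\<in>{1..L}. i \<noteq> j \<longrightarrow> N i ** N j = N j ** N i"
    and copr: "\<forall>i\<in>{1..L}. \<forall>j\<in>{1..L}. i \<noteq> j \<longrightarrow> coprime_mat (N i) (N j)"
    and U_unimod: "unimodular U"
    and R_eq: "R = mprod [1..<L+1] N ** U"
    and div: "\<forall>i\<in>{1..L}. left_divisor (N i) (M i)"
  shows "(\<forall>i\<in>{1..L}. \<not> unimodular (N i) \<longrightarrow>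
            (\<exists>Wh Q. W i ** Wh + N i ** Q = mat 1))
       \<and> (\<forall>Wh :: nat \<Rightarrow> int^'n^'n.
            (\<forall>i\<in>{1..L}. (\<not> unimodular (N i) \<longrightarrow> (\<exists>Q. W i ** Wh i + N i ** Q = mat 1))
                        \<and> (unimodular (N i) \<longrightarrow> Wh i = 0))
            \<longrightarrow> (\<forall>m\<in>fund_set R.
                   m = mat_rem (\<Sum>i=1..L. (W i ** Wh i) *v mat_rem m (M i)) R))"
proof -
  have ns: "nonsingular (N i)" if "i \<in> {1..L}" for i
    using div that unfolding left_divisor_def by simp
  have dN: "\<forall>i\<in>{1..L}. det (N i) \<noteq> 0" using ns unfolding nonsingular_def by simp
  have copN: "\<forall>i\<in>{1..L}. \<forall>j\<in>{1..L}. i \<noteq> j \<longrightarrow> cop (N i) (N j)"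
  proof (intro ballI impI)
    fix i j assume "i \<in> {1..L}" "j \<in> {1..L}" "i \<noteq> j"
    then have h1: "nonsingular (N i)" "coprime_mat (N i) (N j)" using ns copr by auto
    then show "cop (N i) (N j)" by (rule bezout_of_coprime)
  qed
  define xsW where "xsW i = filter (\<lambda>j. j \<noteq> i) [1..<L+1]" for i
  have Wdef: "W i = mprod (xsW i) N" for i unfolding W_def xsW_def by simp
  have setW: "set (xsW i) = {1..L} - {i}" for i unfolding xsW_def by auto
  have distW: "distinct (xsW i)" for i unfolding xsW_def by simp
  have commN: "N a ** N b = N b ** N a" if "a \<in> {1..L}" "b \<in> {1..L}" "a \<noteq> b" for a b
    using comm that by simp
  have copN': "cop (N a) (N b)" if "a \<in> {1..L}" "b \<in> {1..L}" "a \<noteq> b" for a b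
    using copN that by simp
  have copW: "cop (N i) (W i)" if iL: "i \<in> {1..L}" for i
  proof -
    have pc: "\<forall>a\<in>set (xsW i). \<forall>b\<in>set (xsW i). a \<noteq> b \<longrightarrow> N a ** N b = N b ** N a"
    proof (intro ballI impI)
      fix a b assume "a \<in> set (xsW i)" "b \<in> set (xsW i)" "a \<noteq> b"
      then show "N a ** N b = N b ** N a" using commN unfolding setW by simp
    qed
    have hh: "\<forall>j\<in>set (xsW i). cop (N i) (N j) \<and> N i ** N j = N j ** N i"
    proof
      fix j assume "j \<in> set (xsW i)"
      then have "j \<in> {1..L}" "i \<noteq> j" unfolding setW by auto
      then show "cop (N i) (N j) \<and> N i ** N j = N j ** N i" using commN copN' iL by simp
    qed
    show ?thesis unfolding Wdef by (rule mprod_cop[OF distW pc hh])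
  qed
  have part1: "\<forall>i\<in>{1..L}. \<not> unimodular (N i) \<longrightarrow> (\<exists>Wh Q. W i ** Wh + N i ** Q = mat 1)"
  proof (intro ballI impI)
    fix i assume "i \<in> {1..L}"
    then have "cop (N i) (W i)" by (rule copW)
    then have "cop (W i) (N i)" by (rule cop_sym)
    then show "\<exists>Wh Q. W i ** Wh + N i ** Q = mat 1" by (rule cop_mat)
  qed
  have part2: "\<forall>m\<in>fund_set R. m = mat_rem (\<Sum>i=1..L. (W i ** Wh i) *v mat_rem m (M i)) R"
    if H: "\<forall>i\<in>{1..L}. (\<not> unimodular (N i) \<longrightarrow> (\<exists>Q. W i ** Wh i + N i ** Q = mat 1))
                        \<and> (unimodular (N i) \<longrightarrow> Wh i = 0)" for Wh :: "nat \<Rightarrow> int^'n^'n"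
  proof
    fix m assume mR: "m \<in> fund_set R"
    define r where "r i = mat_rem m (M i)" for i
    define x where "x = (\<Sum>i=1..L. (W i ** Wh i) *v r i)"
    have key: "x - m \<in> lat (N i)" if iL: "i \<in> {1..L}" for i
    proof (cases "unimodular (N i)")
      case True then show ?thesis using unimod_lat by blast
    next
      case False
      then obtain Q where Q: "W i ** Wh i + N i ** Q = mat 1" using H iL by blast
      have mr: "m - r i \<in> lat (N i)"
      proof -
        have "m - r i \<in> lat (M i)" unfolding r_def using mat_rem_spec M_ns iL by blast
        moreover obtain P where "M i = N i ** P" using div iL unfolding left_divisor_def by blast
        ultimately show ?thesis using lat_prod[of "m - r i" "N i" P] by simp
      qed
      have ti: "(W i ** Wh i) *v r i = r i - N i *v (Q *v r i)"
      proof -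
        have "(W i ** Wh i + N i ** Q) *v r i = r i" using Q by simp
        then show ?thesis by (simp add: matrix_vector_mult_add_rdistrib matrix_vector_mul_assoc[symmetric] algebra_simps)
      qed
      have others: "(W j ** Wh j) *v r j \<in> lat (N i)" if jL: "j \<in> {1..L} - {i}" for j
      proof -
        have "i \<in> set (xsW j)" unfolding setW using jL iL by blast
        moreover have "\<forall>a\<in>set (xsW j). \<forall>b\<in>set (xsW j). a \<noteq> b \<longrightarrow> N a ** N b = N b ** N a"
        proof (intro ballI impI)
          fix a b assume "a \<in> set (xsW j)" "b \<in> set (xsW j)" "a \<noteq> b"
          then show "N a ** N b = N b ** N a" using commN unfolding setW by simp
        qed
        ultimately have "\<exists>P. mprod (xsW j) N = N i ** P" by (rule mprod_factor[OF distW])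
        then obtain P where "W j = N i ** P" unfolding Wdef by blast
        then have "(W j ** Wh j) *v r j = N i *v (P *v (Wh j *v r j))"
          by (simp add: matrix_vector_mul_assoc matrix_mul_assoc)
        then show ?thesis by (simp add: lat_mult)
      qed
      have "x = (W i ** Wh i) *v r i + (\<Sum>j\<in>{1..L} - {i}. (W j ** Wh j) *v r j)"
        unfolding x_def using iL by (simp add: sum.remove)
      then have xe: "x - m = ((r i - m) - N i *v (Q *v r i)) + (\<Sum>j\<in>{1..L} - {i}. (W j ** Wh j) *v r j)"
        using ti by (simp add: algebra_simps)
      have "(-1::int) *s (m - r i) = r i - m" by (simp add: vec_eq_iff)
      then have l1: "r i - m \<in> lat (N i)" using lat_scale[OF mr, of "-1"] by simp
      have l2: "(\<Sum>j\<in>{1..L} - {i}. (W j ** Wh j) *v r j) \<in> lat (N i)"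
        using others by (intro lat_sum) auto
      have l3: "(r i - m) - N i *v (Q *v r i) \<in> lat (N i)"
        using lat_diff[OF l1 lat_mult] .
      show ?thesis unfolding xe by (rule lat_add[OF l3 l2])
    qed
    have "x - m \<in> lat (mprod [1..<L+1] N)"
    proof (rule mprod_intersect)
      show "distinct [1..<L+1]" by simp
      have setL: "set [1..<L+1] = {1..L}" by auto
      show "\<forall>a\<in>set [1..<L+1]. \<forall>b\<in>set [1..<L+1]. a \<noteq> b \<longrightarrow> N a ** N b = N b ** N a \<and> cop (N a) (N b)"
        unfolding setL using commN copN' by simp
      show "\<forall>j\<in>set [1..<L+1]. det (N j) \<noteq> 0" unfolding setL using dN by blast
      show "\<forall>j\<in>set [1..<L+1]. x - m \<in> lat (N j)" unfolding setL using key by blast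
    qed
    then have "x - m \<in> lat R" using R_eq lat_mult_unimod[OF U_unimod] by simp
    moreover have "nonsingular R" using lcrm unfolding is_lcrm_def by blast
    ultimately have "mat_rem x R = m" using mat_rem_eq mR by blast
    then show "m = mat_rem (\<Sum>i=1..L. (W i ** Wh i) *v mat_rem m (M i)) R"
      unfolding x_def r_def by simp
  qed
  show ?thesis using part1 part2 by blast
qed


end
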